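(* Let $\phi_0=\begin{pmatrix}0&1\\0&0\end{pmatrix}$ and let $\phi_1,\phi_2,\psi\in\mathfrak{sl}(2,\mathbf{C})$ satisfy $$[\psi,\phi_0]=\tfrac12[\phi_0,\phi_1],\qquad [\psi,\phi_1]=[\phi_0,\phi_2],\qquad [\psi,\phi_2]=\tfrac12[\phi_1,\phi_2].$$ Then either $[\phi_0,\phi_1]=0$, in which case $\phi_1,\phi_2$ are multiples of $\phi_0$ (so $\phi=\phi_0+\phi_1z+\phi_2z^2$ is nilpotent), or there is $a\in\mathbf{C}$ with $$\psi=a\phi_0-\tfrac12\phi_1,\qquad \phi_2=a\phi_1-a^2\phi_0.$$ In the latter case, setting $\phi_-=-z\psi+\phi_0+\tfrac z2\phi_1$ and $\phi_+=\tfrac12\phi_1+\phi_2z+\psi$ (so $\phi_-+z\phi_+=\phi$), one has $\phi_-=(1-az)\phi_0+z\phi_1$, $\phi_+=a\phi_-$, and $\phi_-^2=\tfrac12\operatorname{tr}(\phi_-^2)\,I$ with $\operatorname{tr}\phi_-^2=2z(1-az)\operatorname{tr}(\phi_0\phi_1)+z^2\operatorname{tr}(\phi_1^2)$. Consequently the curve $C$ in affine coordinates $(x,y,z)$ on $\mathcal{O}(1)\oplus\mathcal{O}(1)$ on which the cokernel of the commuting family $u(x-\phi_+(z))+v(y-\phi_-(z))$ is supported is $\{y=ax,\ x^2=2z(1-az)\operatorname{tr}(\phi_0\phi_1)+z^2\operatorname{tr}(\phi_1^2)\}$, which is a nonsingular conic in the plane $y=ax$ when $\operatorname{tr}(\phi_0\phi_1)\neq0$,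 and a pair of lines meeting at $x=y=z=0$ when $\operatorname{tr}(\phi_0\phi_1)=0$.
   Context: These equations are the conditions for a zero of the Nahm flow (a fixed point of Nahm's equations up to conjugation) for a rank 2 trace-free co-Higgs field $\phi=(\phi_0+\phi_1z+\phi_2z^2)\frac{d}{dz}$ on the trivial bundle over ${\rm P}^1$, with $\psi$ the infinitesimal conjugation; $x,y$ denote the tautological fibre coordinates of the two $\mathcal{O}(1)$ factors. *)

theory Defs
  imports "HOL-Analysis.Analysis"
begin

type_synonym cmat = "complex^2^2"

definition comm :: "cmat \<Rightarrow> cmat \<Rightarrow> cmat" where
  "comm A B = A ** B - B ** A"

definition smul :: "complex \<Rightarrow> cmat \<Rightarrow> cmat" where
  "smul c A = (\<chi> i j. c * A $ i $ j)"

definition sl2 :: "cmat \<Rightarrow> bool" where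
  "sl2 A \<longleftrightarrow> trace A = 0"

definition phi0 :: cmat where
  "phi0 = (\<chi> i j. if i = 1 \<and> j = 2 then 1 else 0)"

definition phi_of :: "cmat \<Rightarrow> cmat \<Rightarrow> cmat \<Rightarrow> complex \<Rightarrow> cmat" where
  "phi_of p0 p1 p2 z = p0 + smul z p1 + smul (z^2) p2"

definition phi_minus :: "cmat \<Rightarrow> cmat \<Rightarrow> cmat \<Rightarrow> complex \<Rightarrow> cmat" where
  "phi_minus psi p0 p1 z = smul (- z) psi + p0 + smul (z / 2) p1"

definition phi_plus :: "cmat \<Rightarrow> cmat \<Rightarrow> cmat \<Rightarrow> complex \<Rightarrow> cmat" where
  "phi_plus psi p1 p2 z = smul (1 / 2) p1 + smul z p2 + psi"

text \<open>Support (as a set, in affine coordinates (x,y,z)) of the cokernel of the family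
  u(x - P(z)) + v(y - M(z)), (u,v) arbitrary: the points where the map
  C^2 + C^2 -> C^2, (s,t) |-> (x - P z) s + (y - M z) t, is not surjective, i.e. where
  some nonzero covector annihilates both x - P z and y - M z.\<close>
definition coker_support :: "(complex \<Rightarrow> cmat) \<Rightarrow> (complex \<Rightarrow> cmat) \<Rightarrow> (complex \<times> complex \<times> complex) set" where
  "coker_support P M = {(x, y, z). \<exists>\<xi> :: complex^2. \<xi> \<noteq> 0 \<and>
      \<xi> v* (smul x (mat 1) - P z) = 0 \<and> \<xi> v* (smul y (mat 1) - M z) = 0}"

text \<open>A plane affine curve f(s,t) = 0 is a nonsingular conic if f is (up to a nonzero scalar)
  the dehomogenisation w = 1 of a ternary quadratic form whose symmetric matrix is invertible
  (i.e. its projective closure is a nonsingular conic).\<close>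
definition quad_form :: "complex^3^3 \<Rightarrow> complex^3 \<Rightarrow> complex" where
  "quad_form S v = (\<Sum>i\<in>UNIV. \<Sum>j\<in>UNIV. S $ i $ j * v $ i * v $ j)"

definition nonsingular_conic :: "(complex \<Rightarrow> complex \<Rightarrow> complex) \<Rightarrow> bool" where
  "nonsingular_conic f \<longleftrightarrow> (\<exists>S :: complex^3^3. \<exists>k :: complex.
      transpose S = S \<and> det S \<noteq> 0 \<and> k \<noteq> 0 \<and>
      (\<forall>s t. quad_form S (vector [s, t, 1]) = k * f s t))"

end

theory Submission imports Defs begin
lemma cmat_eq: "(A::cmat) = B \<longleftrightarrow> A$1$1=B$1$1 \<and> A$1$2=B$1$2 \<and> A$2$1=B$2$1 \<and> A$2$2=B$2$2"
  by (auto simp: vec_eq_iff forall_2)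
definition M :: "complex \<Rightarrow> complex \<Rightarrow> complex \<Rightarrow> complex \<Rightarrow> cmat" where
  "M a b c d = (\<chi> i j. if i=1 then (if j=1 then a else b) else (if j=1 then c else d))"
lemma M_simps[simp]: "M a b c d $1$1 = a" "M a b c d $1$2 = b" "M a b c d $2$1 = c" "M a b c d $2$2 = d"
  by (simp_all add: M_def)
lemma sl2_M: "sl2 A \<Longrightarrow> \<exists>p q r. A = M p q r (-p)"
  by (rule exI[of _ "A$1$1"], rule exI[of _ "A$1$2"], rule exI[of _ "A$2$1"])
    (simp add: cmat_eq sl2_def trace_def sum_2 eq_neg_iff_add_eq_0 add.commute)
lemmas E = cmat_eq comm_def smul_def phi0_def matrix_matrix_mult_def sum_2 trace_def sl2_def
  phi_of_def phi_minus_def phi_plus_def mat_def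
lemma L0: "comm (M s t u (-s)) phi0 = smul (1/2) (comm phi0 (M p q r (-p))) \<Longrightarrow> u = -r/2 \<and> s = -p/2" by (simp add: E field_simps)
lemma L1: "comm (M (-p/2) t (-r/2) (p/2)) (M p q r (-p)) = comm phi0 (M b c d (-b)) \<Longrightarrow> d = (t+q/2)*r \<and> b = (t+q/2)*p" apply (simp add: E field_simps) by algebra
lemma L2: assumes "comm (M (-p/2) t (-r/2) (p/2)) (M (a*p) c (a*r) (-a*p)) = smul (1/2) (comm (M p q r (-p)) (M (a*p) c (a*r) (-a*p)))"
  "a = t+q/2" "p \<noteq> 0 \<or> r \<noteq> 0" shows "c = a*q - a^2"
proof -
  have h: "2 * (c * r) + t * (a * r) * 2 = q * (a * r) \<and> - (4 * (a * (p * t))) = 4 * (c * p) - 2 * (a * (p * q))"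
    using assms(1) by (simp add: E)
  have "r*(2*c+2*a*t-a*q) = 0 \<and> p*(2*c+2*a*t-a*q)=0" using h by algebra
  then have X: "2*c+2*a*t-a*q = 0" using assms(3) by auto
  have "t = a - q/2" using assms(2) by simp
  then have "2*c+2*a*(a-q/2)-a*q = 0" using X by simp
  then have "2*c = 2*(a*q - a^2)" by (simp add: algebra_simps power2_eq_square)
  then show ?thesis by (metis mult_cancel_left zero_neq_numeral)
qed
lemma v2_eq: "(v::complex^2) = w \<longleftrightarrow> v$1 = w$1 \<and> v$2 = w$2"
  by (auto simp: vec_eq_iff forall_2)

lemma coker_pt:
  "(\<exists>\<xi> :: complex^2. \<xi> \<noteq> 0 \<and>
      \<xi> v* (smul x (mat 1) - smul a (M m n k (-m))) = 0 \<and> \<xi> v* (smul y (mat 1) - M m n k (-m)) = 0)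
   \<longleftrightarrow> x = a*y \<and> y^2 = m^2 + n*k" (is "?L \<longleftrightarrow> ?R")
proof
  assume ?L
  then obtain \<xi> :: "complex^2" where nz: "\<xi> \<noteq> 0" and
    h1: "\<xi> v* (smul x (mat 1) - smul a (M m n k (-m))) = 0" and h2: "\<xi> v* (smul y (mat 1) - M m n k (-m)) = 0"
    by blast
  define u where "u = \<xi>$1"
  define v where "v = \<xi>$2"
  have nz': "u \<noteq> 0 \<or> v \<noteq> 0" using nz unfolding u_def v_def by (auto simp: v2_eq)
  have A: "u*(x - a*m) - v * a*k = 0 \<and> -u*a*n + v * (x+a*m) = 0" using h1
    unfolding u_def v_def by (simp add: v2_eq vector_matrix_mult_def sum_2 smul_def mat_def algebra_simps)
  have B: "u*(y - m) - v * k = 0 \<and> -u*n + v * (y+m) = 0" using h2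
    unfolding u_def v_def by (simp add: v2_eq vector_matrix_mult_def sum_2 smul_def mat_def algebra_simps)
  have "u*(x - a*y) = 0 \<and> v * (x-a*y) = 0" using A B by algebra
  hence 1: "x = a*y" using nz' by auto
  have "u*(y^2 - m^2 - n*k) = 0 \<and> v * (y^2-m^2-n*k) = 0" using B by algebra
  hence "y^2 - m^2 - n*k = 0" using nz' by auto
  thus ?R using 1 by (simp add: algebra_simps)
next
  assume R: ?R
  hence x: "x = a*y" and y: "y^2 = m^2 + n*k" by auto
  obtain u v where nz: "u \<noteq> 0 \<or> v \<noteq> 0" and B: "u*(y - m) - v * k = 0 \<and> -u*n + v * (y+m) = 0"
  proof (cases "k \<noteq> 0 \<or> y - m \<noteq> 0")
    case True
    show ?thesis by (rule that[of k "y - m"]) (use True y in \<open>auto simp: algebra_simps power2_eq_square\<close>)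
  next
    case F: False
    show ?thesis
    proof (cases "y + m \<noteq> 0 \<or> n \<noteq> 0")
      case True
      show ?thesis by (rule that[of "y+m" n]) (use True F in \<open>auto simp: algebra_simps\<close>)
    next
      case False
      show ?thesis by (rule that[of 1 0]) (use False F in \<open>auto simp: algebra_simps\<close>)
    qed
  qed
  define \<xi> :: "complex^2" where "\<xi> = (\<chi> i. if i = 1 then u else v)"
  have e1: "\<xi>$1 = u" "\<xi>$2 = v" unfolding \<xi>_def by auto
  have "\<xi> \<noteq> 0" using nz e1 by (auto simp: v2_eq)
  moreover have "\<xi> v* (smul y (mat 1) - M m n k (-m)) = 0" using B
    by (simp add: e1 v2_eq vector_matrix_mult_def sum_2 smul_def mat_def algebra_simps)
  moreover have "\<xi> v* (smul x (mat 1) - smul a (M m n k (-m))) = 0"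
  proof -
    have "a*(u*(y - m) - v * k) = 0 \<and> a*(-u*n + v * (y+m)) = 0" using B by simp
    thus ?thesis unfolding x
      by (simp add: e1 v2_eq vector_matrix_mult_def sum_2 smul_def mat_def algebra_simps)
  qed
  ultimately show ?L by blast
qed
lemma conic: assumes "T \<noteq> 0" shows "nonsingular_conic (\<lambda>y z. 2*y^2 - (2*z*(1 - a*z) * T + z^2 * U))"
proof -
  define S :: "complex^3^3" where "S = (\<chi> i j. if i=1\<and>j=1 then 2 else if i=2\<and>j=2 then 2*a*T-U
     else if (i=2\<and>j=3) \<or> (i=3\<and>j=2) then -T else 0)"
  have "transpose S = S" unfolding S_def transpose_def by (auto simp: vec_eq_iff forall_3)
  moreover have "det S = -2*T^2" unfolding S_def by (simp add: det_3 power2_eq_square)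
  moreover have "\<forall>s t. quad_form S (vector [s, t, 1]) = 1 * (2 * s ^ 2 - (2 * t * (1 - a * t) * T + t ^ 2 * U))"
    unfolding S_def quad_form_def by (simp add: sum_3 power2_eq_square algebra_simps)
  ultimately show ?thesis unfolding nonsingular_conic_def using assms
    by (intro exI[of _ S] exI[of _ 1]) auto
qed
lemma Lc: "comm phi0 (M p q r (-p)) = 0 \<longleftrightarrow> p = 0 \<and> r = 0" by (auto simp: E)

theorem mainTheorem4:
  fixes phi1 phi2 psi :: cmat
  assumes "sl2 phi1" and "sl2 phi2" and "sl2 psi"
    and e0: "comm psi phi0 = smul (1/2) (comm phi0 phi1)"
    and e1: "comm psi phi1 = comm phi0 phi2"
    and e2: "comm psi phi2 = smul (1/2) (comm phi1 phi2)"
  shows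
    "(comm phi0 phi1 = 0 \<longrightarrow>
        (\<exists>c1. phi1 = smul c1 phi0) \<and> (\<exists>c2. phi2 = smul c2 phi0) \<and>
        (\<forall>z. phi_of phi0 phi1 phi2 z ** phi_of phi0 phi1 phi2 z = 0))
     \<and>
     (comm phi0 phi1 \<noteq> 0 \<longrightarrow>
        (\<exists>a::complex.
           psi = smul a phi0 - smul (1/2) phi1 \<and>
           phi2 = smul a phi1 - smul (a^2) phi0 \<and>
           (\<forall>z. phi_minus psi phi0 phi1 z + smul z (phi_plus psi phi1 phi2 z)
                  = phi_of phi0 phi1 phi2 z) \<and>
           (\<forall>z. phi_minus psi phi0 phi1 z = smul (1 - a*z) phi0 + smul z phi1) \<and>
           (\<forall>z. phi_plus psi phi1 phi2 z = smul a (phi_minus psi phi0 phi1 z)) \<and>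
           (\<forall>z. phi_minus psi phi0 phi1 z ** phi_minus psi phi0 phi1 z
                  = smul ((1/2) * trace (phi_minus psi phi0 phi1 z ** phi_minus psi phi0 phi1 z)) (mat 1)) \<and>
           (\<forall>z. trace (phi_minus psi phi0 phi1 z ** phi_minus psi phi0 phi1 z)
                  = 2*z*(1 - a*z) * trace (phi0 ** phi1) + z^2 * trace (phi1 ** phi1)) \<and>
           coker_support (phi_plus psi phi1 phi2) (phi_minus psi phi0 phi1)
             = {(x, y, z). x = a*y \<and>
                 2*y^2 = 2*z*(1 - a*z) * trace (phi0 ** phi1) + z^2 * trace (phi1 ** phi1)} \<and>
           (trace (phi0 ** phi1) \<noteq> 0 \<longrightarrow>
              nonsingular_conic (\<lambda>y z. 2*y^2 - (2*z*(1 - a*z) * trace (phi0 ** phi1)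
                                                   + z^2 * trace (phi1 ** phi1)))) \<and>
           (trace (phi0 ** phi1) = 0 \<longrightarrow>
              (\<exists>r::complex. r \<noteq> 0 \<and>
                 coker_support (phi_plus psi phi1 phi2) (phi_minus psi phi0 phi1)
                   = {(x, y, z). x = a*y \<and> (y = r*z \<or> y = - r*z)}))))"
proof -
  obtain p q r where P1: "phi1 = M p q r (-p)" using sl2_M assms(1) by blast
  obtain b c d where P2: "phi2 = M b c d (-b)" using sl2_M assms(2) by blast
  obtain s t u where P3: "psi = M s t u (-s)" using sl2_M assms(3) by blast
  have su: "u = -r/2 \<and> s = -p/2" using L0 e0 unfolding P1 P3 by blast
  have P3': "psi = M (-p/2) t (-r/2) (p/2)" using P3 su by simp
  have bd: "d = (t+q/2)*r \<and> b = (t+q/2)*p" using L1 e1 unfolding P1 P2 P3' by blast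
  have cc: "comm phi0 phi1 = 0 \<longleftrightarrow> p = 0 \<and> r = 0" unfolding P1 by (rule Lc)
  have part1: "comm phi0 phi1 = 0 \<longrightarrow>
        (\<exists>c1. phi1 = smul c1 phi0) \<and> (\<exists>c2. phi2 = smul c2 phi0) \<and>
        (\<forall>z. phi_of phi0 phi1 phi2 z ** phi_of phi0 phi1 phi2 z = 0)"
  proof
    assume "comm phi0 phi1 = 0"
    hence pr: "p = 0" "r = 0" using cc by auto
    hence "b = 0" "d = 0" using bd by auto
    hence Q1: "phi1 = M 0 q 0 0" and Q2: "phi2 = M 0 c 0 0" using P1 P2 pr by auto
    show "(\<exists>c1. phi1 = smul c1 phi0) \<and> (\<exists>c2. phi2 = smul c2 phi0) \<and>
        (\<forall>z. phi_of phi0 phi1 phi2 z ** phi_of phi0 phi1 phi2 z = 0)"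
      unfolding Q1 Q2 by (auto simp: E intro!: exI[of _ q] exI[of _ c])
  qed
  have part2: "comm phi0 phi1 \<noteq> 0 \<longrightarrow>
        (\<exists>a::complex.
           psi = smul a phi0 - smul (1/2) phi1 \<and>
           phi2 = smul a phi1 - smul (a^2) phi0 \<and>
           (\<forall>z. phi_minus psi phi0 phi1 z + smul z (phi_plus psi phi1 phi2 z)
                  = phi_of phi0 phi1 phi2 z) \<and>
           (\<forall>z. phi_minus psi phi0 phi1 z = smul (1 - a*z) phi0 + smul z phi1) \<and>
           (\<forall>z. phi_plus psi phi1 phi2 z = smul a (phi_minus psi phi0 phi1 z)) \<and>
           (\<forall>z. phi_minus psi phi0 phi1 z ** phi_minus psi phi0 phi1 z
                  = smul ((1/2) * trace (phi_minus psi phi0 phi1 z ** phi_minus psi phi0 phi1 z)) (mat 1)) \<and>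
           (\<forall>z. trace (phi_minus psi phi0 phi1 z ** phi_minus psi phi0 phi1 z)
                  = 2*z*(1 - a*z) * trace (phi0 ** phi1) + z^2 * trace (phi1 ** phi1)) \<and>
           coker_support (phi_plus psi phi1 phi2) (phi_minus psi phi0 phi1)
             = {(x, y, z). x = a*y \<and>
                 2*y^2 = 2*z*(1 - a*z) * trace (phi0 ** phi1) + z^2 * trace (phi1 ** phi1)} \<and>
           (trace (phi0 ** phi1) \<noteq> 0 \<longrightarrow>
              nonsingular_conic (\<lambda>y z. 2*y^2 - (2*z*(1 - a*z) * trace (phi0 ** phi1)
                                                   + z^2 * trace (phi1 ** phi1)))) \<and>
           (trace (phi0 ** phi1) = 0 \<longrightarrow>
              (\<exists>r::complex. r \<noteq> 0 \<and>
                 coker_support (phi_plus psi phi1 phi2) (phi_minus psi phi0 phi1)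
                   = {(x, y, z). x = a*y \<and> (y = r*z \<or> y = - r*z)})))"
  proof
    assume "comm phi0 phi1 \<noteq> 0"
    hence pr: "p \<noteq> 0 \<or> r \<noteq> 0" using cc by auto
    define a where "a = t + q/2"
    have P2': "phi2 = M (a*p) c (a*r) (-a*p)" using P2 bd a_def by (simp add: algebra_simps)
    have cq: "c = a*q - a^2" using L2[OF e2[unfolded P1 P2' P3'] a_def pr] .
    have tq: "t = a - q/2" by (simp add: a_def)
    have Q2: "phi2 = M (a*p) (a*q - a^2) (a*r) (-a*p)" using P2' cq by simp
    have Q3: "psi = M (-p/2) (a - q/2) (-r/2) (p/2)" using P3' tq by simp
    define N where "N z = M (z*p) (1 - a*z + z*q) (z*r) (-(z*p))" for z
    have Nm: "phi_minus psi phi0 phi1 z = N z" for z unfolding P1 Q3 N_def by (simp add: E field_simps)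
    have Np: "phi_plus psi phi1 phi2 z = smul a (N z)" for z unfolding P1 Q2 Q3 N_def by (simp add: E field_simps power2_eq_square)
    have tr01: "trace (phi0 ** phi1) = r" unfolding P1 by (simp add: E)
    have tr11: "trace (phi1 ** phi1) = 2*p^2+2*q*r" unfolding P1 by (simp add: E power2_eq_square)
    have trN: "trace (N z ** N z) = 2*((z*p)^2 + (1-a*z+z*q)*(z*r))" for z
      unfolding N_def by (simp add: E power2_eq_square algebra_simps)
    have sqN: "N z ** N z = smul ((z*p)^2 + (1-a*z+z*q)*(z*r)) (mat 1)" for z
      unfolding N_def by (simp add: E power2_eq_square algebra_simps)
    have c1: "psi = smul a phi0 - smul (1/2) phi1" unfolding P1 Q3 by (simp add: E field_simps)
    have c2: "phi2 = smul a phi1 - smul (a^2) phi0" unfolding P1 Q2 by (simp add: E field_simps)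
    have c3: "phi_minus psi phi0 phi1 z + smul z (phi_plus psi phi1 phi2 z) = phi_of phi0 phi1 phi2 z" for z
      unfolding P1 Q2 Q3 by (simp add: E field_simps power2_eq_square)
    have c4: "phi_minus psi phi0 phi1 z = smul (1 - a*z) phi0 + smul z phi1" for z
      unfolding Nm unfolding N_def P1 by (simp add: E algebra_simps)
    have c5: "phi_plus psi phi1 phi2 z = smul a (phi_minus psi phi0 phi1 z)" for z
      unfolding Nm Np ..
    have c6: "phi_minus psi phi0 phi1 z ** phi_minus psi phi0 phi1 z
                  = smul ((1/2) * trace (phi_minus psi phi0 phi1 z ** phi_minus psi phi0 phi1 z)) (mat 1)" for z
      unfolding Nm unfolding trN unfolding sqN by (rule arg_cong[where f="\<lambda>c. smul c (mat 1)"]) (simp add: field_simps)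
    have c7: "trace (phi_minus psi phi0 phi1 z ** phi_minus psi phi0 phi1 z)
                  = 2*z*(1 - a*z) * trace (phi0 ** phi1) + z^2 * trace (phi1 ** phi1)" for z
      unfolding Nm trN tr01 tr11 by (simp add: power2_eq_square algebra_simps)
    have cs: "coker_support (phi_plus psi phi1 phi2) (phi_minus psi phi0 phi1)
       = {(x, y, z). x = a*y \<and> y^2 = (z*p)^2 + (1-a*z+z*q)*(z*r)}"
      unfolding coker_support_def Nm Np N_def coker_pt by simp
    have c8: "coker_support (phi_plus psi phi1 phi2) (phi_minus psi phi0 phi1)
             = {(x, y, z). x = a*y \<and>
                 2*y^2 = 2*z*(1 - a*z) * trace (phi0 ** phi1) + z^2 * trace (phi1 ** phi1)}"
      proof -
        have k: "2*z*(1-a*z)*r + z^2*(2*p^2+2*q*r) = 2*((z*p)^2 + (1-a*z+z*q)*(z*r))" for z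
          by (simp add: algebra_simps power2_eq_square)
        have k2: "(2*w^2 = 2*X) = (w^2 = X)" for w X :: complex by simp
        show ?thesis unfolding cs tr01 tr11 k k2 by (rule refl)
      qed
    have c9: "trace (phi0 ** phi1) \<noteq> 0 \<longrightarrow>
              nonsingular_conic (\<lambda>y z. 2*y^2 - (2*z*(1 - a*z) * trace (phi0 ** phi1)
                                                   + z^2 * trace (phi1 ** phi1)))"
      using conic by blast
    have c10: "trace (phi0 ** phi1) = 0 \<longrightarrow>
              (\<exists>r::complex. r \<noteq> 0 \<and>
                 coker_support (phi_plus psi phi1 phi2) (phi_minus psi phi0 phi1)
                   = {(x, y, z). x = a*y \<and> (y = r*z \<or> y = - r*z)})"
    proof
      assume "trace (phi0 ** phi1) = 0"
      hence r0: "r = 0" using tr01 by simp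
      hence p0: "p \<noteq> 0" using pr by simp
      have k3: "(y^2 = (z*p)^2 + (1-a*z+z*q)*(z*0)) = (y = p*z \<or> y = - p*z)" for y z :: complex
      proof -
        have "(y^2 = (z*p)^2 + (1-a*z+z*q)*(z*0)) = (y^2 = (p*z)^2)" by (simp add: mult.commute)
        also have "\<dots> = (y = p*z \<or> y = -(p*z))" by (rule power2_eq_iff)
        also have "\<dots> = (y = p*z \<or> y = - p*z)" by simp
        finally show ?thesis .
      qed
      have "coker_support (phi_plus psi phi1 phi2) (phi_minus psi phi0 phi1)
                   = {(x, y, z). x = a*y \<and> (y = p*z \<or> y = - p*z)}"
        unfolding cs r0 k3 by (rule refl)
      thus "\<exists>r::complex. r \<noteq> 0 \<and>
                 coker_support (phi_plus psi phi1 phi2) (phi_minus psi phi0 phi1)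
                   = {(x, y, z). x = a*y \<and> (y = r*z \<or> y = - r*z)}" using p0 by blast
    qed
    show "\<exists>a::complex.
           psi = smul a phi0 - smul (1/2) phi1 \<and>
           phi2 = smul a phi1 - smul (a^2) phi0 \<and>
           (\<forall>z. phi_minus psi phi0 phi1 z + smul z (phi_plus psi phi1 phi2 z)
                  = phi_of phi0 phi1 phi2 z) \<and>
           (\<forall>z. phi_minus psi phi0 phi1 z = smul (1 - a*z) phi0 + smul z phi1) \<and>
           (\<forall>z. phi_plus psi phi1 phi2 z = smul a (phi_minus psi phi0 phi1 z)) \<and>
           (\<forall>z. phi_minus psi phi0 phi1 z ** phi_minus psi phi0 phi1 z
                  = smul ((1/2) * trace (phi_minus psi phi0 phi1 z ** phi_minus psi phi0 phi1 z)) (mat 1)) \<and>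
           (\<forall>z. trace (phi_minus psi phi0 phi1 z ** phi_minus psi phi0 phi1 z)
                  = 2*z*(1 - a*z) * trace (phi0 ** phi1) + z^2 * trace (phi1 ** phi1)) \<and>
           coker_support (phi_plus psi phi1 phi2) (phi_minus psi phi0 phi1)
             = {(x, y, z). x = a*y \<and>
                 2*y^2 = 2*z*(1 - a*z) * trace (phi0 ** phi1) + z^2 * trace (phi1 ** phi1)} \<and>
           (trace (phi0 ** phi1) \<noteq> 0 \<longrightarrow>
              nonsingular_conic (\<lambda>y z. 2*y^2 - (2*z*(1 - a*z) * trace (phi0 ** phi1)
                                                   + z^2 * trace (phi1 ** phi1)))) \<and>
           (trace (phi0 ** phi1) = 0 \<longrightarrow>
              (\<exists>r::complex. r \<noteq> 0 \<and>
                 coker_support (phi_plus psi phi1 phi2) (phi_minus psi phi0 phi1)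
                   = {(x, y, z). x = a*y \<and> (y = r*z \<or> y = - r*z)}))"
      using c1 c2 c3 c4 c5 c6 c7 c8 c9 c10 by blast
  qed
  show ?thesis using part1 part2 by blast
qed
end
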